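(* Let $\mathcal{R}$ be a TRS, $s$ a total term, and $S$ a reduction strongly $p$-converging from $s$ to $t$. Then $S$ is total (all its terms and $t$ are total) iff no prefix of $S$ has a volatile position.
   Context: Total terms contain no $\bot$; partial terms are terms over $\Sigma_\bot=\Sigma\uplus\{\bot\}$ ordered by $\le_\bot$ (replacing subterms by $\bot$), a complete semilattice; $\liminf_{\iota\to\alpha}a_\iota=\bigvee_{\beta<\alpha}\bigwedge_{\beta\le\iota<\alpha}a_\iota$. A reduction $S=(t_\iota\to_{\pi_\iota}t_{\iota+1})_{\iota<\alpha}$ with contexts $c_\iota$ ($t_\iota$ with position $\pi_\iota$ replaced by $\bot$) strongly $p$-converges to $t$ if $\liminf_{\iota\to\lambda}c_\iota=t_\lambda$ for every limit $\lambda<\alpha$ and $t$ is the last term (closed) or $t=\liminf_{\iota\to\alpha}c_\iota$ (open). A position $\pi$ is volatile in an open reduction $(t_\iota\to_{\pi_\iota}t_{\iota+1})_{\iota<\lambda}$ if for every $\beta<\lambda$ there is $\beta\le\gamma<\lambda$ with $\pi_\gamma=\pi$; a prefix of $S$ is $S|_\beta=(t_\iota\to_{\pi_\iota}t_{\iota+1})_{\iota<\beta}$, $\beta\le\alpha$. *)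

theory Defs
  imports Main
begin

text \<open>Symbols of Sigma_bot plus variables. A (partial) term is a map from positions
(nat lists) to symbols, undefined (None) outside its set of positions.\<close>

datatype ('f, 'v) sym = Fun 'f | Var 'v | Bot

type_synonym ('f, 'v) pterm = "nat list \<Rightarrow> ('f, 'v) sym option"

definition wf_pterm :: "('f \<Rightarrow> nat) \<Rightarrow> ('f, 'v) pterm \<Rightarrow> bool" where
  "wf_pterm ar t \<longleftrightarrow>
     t [] \<noteq> None \<and>
     (\<forall>p i. t (p @ [i]) \<noteq> None \<longrightarrow> (\<exists>f. t p = Some (Fun f) \<and> i < ar f)) \<and>
     (\<forall>p f i. t p = Some (Fun f) \<and> i < ar f \<longrightarrow> t (p @ [i]) \<noteq> None)"

definition poss :: "('f, 'v) pterm \<Rightarrow> nat list set" where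
  "poss t = {p. t p \<noteq> None}"

definition total_term :: "('f, 'v) pterm \<Rightarrow> bool" where
  "total_term t \<longleftrightarrow> (\<forall>p. t p \<noteq> Some Bot)"

definition finite_term :: "('f, 'v) pterm \<Rightarrow> bool" where
  "finite_term t \<longleftrightarrow> finite (poss t)"

definition vars_term :: "('f, 'v) pterm \<Rightarrow> 'v set" where
  "vars_term t = {x. \<exists>p. t p = Some (Var x)}"

text \<open>The order le_bot: s is obtained from t by replacing subterms by Bot.\<close>
definition le_bot :: "('f, 'v) pterm \<Rightarrow> ('f, 'v) pterm \<Rightarrow> bool" where
  "le_bot s t \<longleftrightarrow> (\<forall>p. s p \<noteq> None \<longrightarrow> t p \<noteq> None) \<and>
                  (\<forall>p. s p \<noteq> None \<and> s p \<noteq> Some Bot \<longrightarrow> s p = t p)"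

definition bot_term :: "('f, 'v) pterm" where
  "bot_term = (\<lambda>p. if p = [] then Some Bot else None)"

definition subterm_at :: "('f, 'v) pterm \<Rightarrow> nat list \<Rightarrow> ('f, 'v) pterm" where
  "subterm_at t \<pi> = (\<lambda>p. t (\<pi> @ p))"

definition replace_at :: "('f, 'v) pterm \<Rightarrow> nat list \<Rightarrow> ('f, 'v) pterm \<Rightarrow> ('f, 'v) pterm" where
  "replace_at t \<pi> u = (\<lambda>p. if \<exists>q. p = \<pi> @ q then u (drop (length \<pi>) p) else t p)"

definition subst_apply :: "('v \<Rightarrow> ('f, 'v) pterm) \<Rightarrow> ('f, 'v) pterm \<Rightarrow> ('f, 'v) pterm" where
  "subst_apply \<sigma> l = (\<lambda>p.
     if \<exists>q r x. p = q @ r \<and> l q = Some (Var x)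
     then (let (q, r, x) = (SOME (q, r, x). p = q @ r \<and> l q = Some (Var x)) in \<sigma> x r)
     else l p)"

definition is_TRS :: "('f \<Rightarrow> nat) \<Rightarrow> (('f, 'v) pterm \<times> ('f, 'v) pterm) set \<Rightarrow> bool" where
  "is_TRS ar R \<longleftrightarrow> (\<forall>(l, r) \<in> R.
      wf_pterm ar l \<and> wf_pterm ar r \<and> total_term l \<and> total_term r \<and>
      finite_term l \<and> finite_term r \<and> (\<exists>f. l [] = Some (Fun f)) \<and>
      vars_term r \<subseteq> vars_term l)"

definition rstep :: "('f \<Rightarrow> nat) \<Rightarrow> (('f, 'v) pterm \<times> ('f, 'v) pterm) set \<Rightarrow>
    ('f, 'v) pterm \<Rightarrow> nat list \<Rightarrow> ('f, 'v) pterm \<Rightarrow> bool" where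
  "rstep ar R t \<pi> t' \<longleftrightarrow> wf_pterm ar t \<and> wf_pterm ar t' \<and> \<pi> \<in> poss t \<and>
     (\<exists>l r \<sigma>. (l, r) \<in> R \<and> (\<forall>x. wf_pterm ar (\<sigma> x)) \<and>
        subterm_at t \<pi> = subst_apply \<sigma> l \<and> t' = replace_at t \<pi> (subst_apply \<sigma> r))"

definition is_glb :: "('f \<Rightarrow> nat) \<Rightarrow> ('f, 'v) pterm set \<Rightarrow> ('f, 'v) pterm \<Rightarrow> bool" where
  "is_glb ar A t \<longleftrightarrow> wf_pterm ar t \<and> (\<forall>a\<in>A. le_bot t a) \<and>
     (\<forall>u. wf_pterm ar u \<and> (\<forall>a\<in>A. le_bot u a) \<longrightarrow> le_bot u t)"

definition is_lub :: "('f \<Rightarrow> nat) \<Rightarrow> ('f, 'v) pterm set \<Rightarrow> ('f, 'v) pterm \<Rightarrow> bool" where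
  "is_lub ar A t \<longleftrightarrow> wf_pterm ar t \<and> (\<forall>a\<in>A. le_bot a t) \<and>
     (\<forall>u. wf_pterm ar u \<and> (\<forall>a\<in>A. le_bot a u) \<longrightarrow> le_bot t u)"

text \<open>Ordinal-indexed sequences are indexed by elements of an arbitrary well-order.
is_liminf ar lam a t: t = liminf_{iota -> lam} a_iota
  = Join_{beta<lam} Meet_{beta <= iota < lam} a_iota.\<close>
definition is_liminf :: "('f \<Rightarrow> nat) \<Rightarrow> 'o::wellorder \<Rightarrow> ('o \<Rightarrow> ('f, 'v) pterm) \<Rightarrow> ('f, 'v) pterm \<Rightarrow> bool" where
  "is_liminf ar lam a t \<longleftrightarrow>
     (\<exists>g. (\<forall>\<beta><lam. is_glb ar {a \<iota> | \<iota>. \<beta> \<le> \<iota> \<and> \<iota> < lam} (g \<beta>)) \<and>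
          is_lub ar {g \<beta> | \<beta>. \<beta> < lam} t)"

definition osucc :: "'o::wellorder \<Rightarrow> 'o" where
  "osucc i = (LEAST j. i < j)"

definition is_limit :: "'o::wellorder \<Rightarrow> bool" where
  "is_limit lam \<longleftrightarrow> (\<exists>i. i < lam) \<and> (\<forall>i<lam. \<exists>j. i < j \<and> j < lam)"

text \<open>A reduction S = (t_iota ->_{pi_iota} t_{iota+1})_{iota<alpha} is given by
ts (terms, t_iota for iota <= alpha), ps (positions) and the length alpha.\<close>
definition is_reduction :: "('f \<Rightarrow> nat) \<Rightarrow> (('f, 'v) pterm \<times> ('f, 'v) pterm) set \<Rightarrow>
    ('o::wellorder \<Rightarrow> ('f, 'v) pterm) \<Rightarrow> ('o \<Rightarrow> nat list) \<Rightarrow> 'o \<Rightarrow> bool" where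
  "is_reduction ar R ts ps \<alpha> \<longleftrightarrow> (\<forall>\<iota><\<alpha>. rstep ar R (ts \<iota>) (ps \<iota>) (ts (osucc \<iota>)))"

definition ctxt_at :: "('o \<Rightarrow> ('f, 'v) pterm) \<Rightarrow> ('o \<Rightarrow> nat list) \<Rightarrow> 'o \<Rightarrow> ('f, 'v) pterm" where
  "ctxt_at ts ps \<iota> = replace_at (ts \<iota>) (ps \<iota>) bot_term"

definition strongly_p_converges :: "('f \<Rightarrow> nat) \<Rightarrow> (('f, 'v) pterm \<times> ('f, 'v) pterm) set \<Rightarrow>
    ('o::wellorder \<Rightarrow> ('f, 'v) pterm) \<Rightarrow> ('o \<Rightarrow> nat list) \<Rightarrow> 'o \<Rightarrow>
    ('f, 'v) pterm \<Rightarrow> ('f, 'v) pterm \<Rightarrow> bool" where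
  "strongly_p_converges ar R ts ps \<alpha> s t \<longleftrightarrow>
     is_reduction ar R ts ps \<alpha> \<and> ts (LEAST i. True) = s \<and>
     (\<forall>lam<\<alpha>. is_limit lam \<longrightarrow> is_liminf ar lam (ctxt_at ts ps) (ts lam)) \<and>
     (if is_limit \<alpha> then is_liminf ar \<alpha> (ctxt_at ts ps) t else t = ts \<alpha>)"

definition volatile_in_prefix :: "('o::wellorder \<Rightarrow> nat list) \<Rightarrow> 'o \<Rightarrow> nat list \<Rightarrow> bool" where
  "volatile_in_prefix ps \<beta> \<pi> \<longleftrightarrow> is_limit \<beta> \<and>
     (\<forall>\<beta>'<\<beta>. \<exists>\<gamma>. \<beta>' \<le> \<gamma> \<and> \<gamma> < \<beta> \<and> ps \<gamma> = \<pi>)"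

definition reduction_total :: "('o::wellorder \<Rightarrow> ('f, 'v) pterm) \<Rightarrow> 'o \<Rightarrow> ('f, 'v) pterm \<Rightarrow> bool" where
  "reduction_total ts \<alpha> t \<longleftrightarrow> (\<forall>\<iota><\<alpha>. total_term (ts \<iota>)) \<and> total_term t"

end

theory Submission
  imports Defs
begin

lemma wf_prefix: "wf_pterm ar t \<Longrightarrow> t (p @ q) \<noteq> None \<Longrightarrow> t p \<noteq> None"
proof (induction q rule: rev_induct)
  case Nil then show ?case by simp
next
  case (snoc x xs)
  then have "t ((p @ xs) @ [x]) \<noteq> None" by simp
  then have "t (p @ xs) \<noteq> None" using snoc(2) unfolding wf_pterm_def by blast
  then show ?case using snoc by blast
qed

lemma wf_leaf: "wf_pterm ar t \<Longrightarrow> (\<forall>f. t q \<noteq> Some (Fun f)) \<Longrightarrow> t (q @ us) \<noteq> None \<Longrightarrow> us = []"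
proof (rule ccontr)
  assume a: "wf_pterm ar t" "\<forall>f. t q \<noteq> Some (Fun f)" "t (q @ us) \<noteq> None" "us \<noteq> []"
  then obtain i us' where us: "us = i # us'" by (cases us) auto
  have "t ((q @ [i]) @ us') \<noteq> None" using a(3) us by simp
  then have "t (q @ [i]) \<noteq> None" using wf_prefix a(1) by blast
  then show False using a(1,2) unfolding wf_pterm_def by blast
qed

lemma replace_bot: "replace_at t \<pi> bot_term x =
   (if x = \<pi> then Some Bot else if (\<exists>q. x = \<pi> @ q) then None else t x)"
  unfolding replace_at_def bot_term_def by auto

lemma replace_wf:
  assumes wf: "wf_pterm ar t" and pos: "t \<pi> \<noteq> None"
  shows "wf_pterm ar (replace_at t \<pi> bot_term)"
proof -
  let ?u = "replace_at t \<pi> bot_term"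
  have c1: "?u [] \<noteq> None" using wf unfolding replace_bot wf_pterm_def by auto
  have c2: "\<exists>f. ?u p = Some (Fun f) \<and> i < ar f" if h: "?u (p @ [i]) \<noteq> None" for p i
  proof -
    have np: "\<not> (\<exists>q. p = \<pi> @ q)"
    proof
      assume "\<exists>q. p = \<pi> @ q" then obtain q where "p = \<pi> @ q" by blast
      then show False using h unfolding replace_bot by auto
    qed
    have "t (p @ [i]) \<noteq> None"
    proof (cases "p @ [i] = \<pi>")
      case True then show ?thesis using pos by simp
    next
      case False then show ?thesis using h unfolding replace_bot by (auto split: if_splits)
    qed
    then obtain f where "t p = Some (Fun f)" "i < ar f" using wf unfolding wf_pterm_def by blast
    moreover have "?u p = t p" using np unfolding replace_bot by auto
    ultimately show ?thesis by auto
  qed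
  have c3: "?u (p @ [i]) \<noteq> None" if h: "?u p = Some (Fun f)" "i < ar f" for p f i
  proof -
    have np: "\<not> (\<exists>q. p = \<pi> @ q)" "p \<noteq> \<pi>" using h unfolding replace_bot by (auto split: if_splits)
    have tp: "t p = Some (Fun f)" using h np unfolding replace_bot by (auto split: if_splits)
    have tc: "t (p @ [i]) \<noteq> None" using wf tp h(2) unfolding wf_pterm_def by blast
    show ?thesis
    proof (cases "\<exists>q. p @ [i] = \<pi> @ q")
      case True
      then obtain q where q: "p @ [i] = \<pi> @ q" by blast
      show ?thesis
      proof (cases "q = []")
        case True then show ?thesis using q unfolding replace_bot by auto
      next
        case False
        then obtain q' j where "q = q' @ [j]" by (metis rev_exhaust)
        then have "p = \<pi> @ q'" using q by simp
        then show ?thesis using np by blast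
      qed
    next
      case False then show ?thesis using tc unfolding replace_bot by auto
    qed
  qed
  show ?thesis unfolding wf_pterm_def using c1 c2 c3 by blast
qed

lemma le_bot_trans: "le_bot a b \<Longrightarrow> le_bot b c \<Longrightarrow> le_bot a c"
  unfolding le_bot_def by metis

lemma var_unique:
  assumes wf: "wf_pterm ar l" and "l q = Some (Var x)" "l q2 = Some (Var x2)" "q @ r = q2 @ r2"
  shows "q = q2"
proof -
  from assms(4) obtain us where "q = q2 @ us \<and> r2 = us @ r \<or> q2 = q @ us \<and> r = us @ r2"
    by (metis append_eq_append_conv2)
  then show ?thesis
  proof
    assume h: "q = q2 @ us \<and> r2 = us @ r"
    then have "us = []" using wf_leaf[OF wf, of q2 us] assms(2,3) by auto
    then show ?thesis using h by simp
  next
    assume h: "q2 = q @ us \<and> r = us @ r2"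
    then have "us = []" using wf_leaf[OF wf, of q us] assms(2,3) by auto
    then show ?thesis using h by simp
  qed
qed

lemma subst_apply_at:
  assumes wf: "wf_pterm ar l" and lq: "l q = Some (Var x)"
  shows "subst_apply \<sigma> l (q @ r) = \<sigma> x r"
proof -
  have ex: "\<exists>q' r' x'. q @ r = q' @ r' \<and> l q' = Some (Var x')" using lq by blast
  have "(SOME (q', r', x'). q @ r = q' @ r' \<and> l q' = Some (Var x')) = (q, r, x)"
  proof (rule some_equality)
    show "case (q, r, x) of (q', r', x') \<Rightarrow> q @ r = q' @ r' \<and> l q' = Some (Var x')" using lq by simp
  next
    fix z assume "case z of (q', r', x') \<Rightarrow> q @ r = q' @ r' \<and> l q' = Some (Var x')"
    then obtain q' r' x' where z: "z = (q', r', x')" "q @ r = q' @ r'" "l q' = Some (Var x')"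
      by (cases z) auto
    then have "q = q'" using var_unique[OF wf lq z(3)] by blast
    then show "z = (q, r, x)" using z lq by simp
  qed
  then show ?thesis unfolding subst_apply_def using ex by simp
qed

lemma rstep_total:
  assumes trs: "is_TRS ar R" and st: "rstep ar R t \<pi> t'" and tot: "total_term t"
  shows "total_term t'"
proof -
  obtain l r \<sigma> where lr: "(l, r) \<in> R" and sub: "subterm_at t \<pi> = subst_apply \<sigma> l"
    and t': "t' = replace_at t \<pi> (subst_apply \<sigma> r)" using st unfolding rstep_def by blast
  have wfl: "wf_pterm ar l" and wfr: "wf_pterm ar r" and totr: "total_term r"
    and vs: "vars_term r \<subseteq> vars_term l" using trs lr unfolding is_TRS_def by auto
  have sr: "subst_apply \<sigma> r q \<noteq> Some Bot" for q
  proof (cases "\<exists>q1 r1 x. q = q1 @ r1 \<and> r q1 = Some (Var x)")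
    case True
    then obtain q1 r1 x where q: "q = q1 @ r1" "r q1 = Some (Var x)" by blast
    have e1: "subst_apply \<sigma> r q = \<sigma> x r1" using subst_apply_at[OF wfr q(2)] q(1) by simp
    have "x \<in> vars_term l" using vs q(2) unfolding vars_term_def by blast
    then obtain q0 where q0: "l q0 = Some (Var x)" unfolding vars_term_def by blast
    have "\<sigma> x r1 = subst_apply \<sigma> l (q0 @ r1)" using subst_apply_at[OF wfl q0] by simp
    also have "\<dots> = t (\<pi> @ q0 @ r1)" using sub unfolding subterm_at_def by metis
    finally show ?thesis using e1 tot unfolding total_term_def by simp
  next
    case False
    then show ?thesis using totr unfolding subst_apply_def total_term_def by metis
  qed
  show ?thesis unfolding total_term_def t' replace_at_def using sr tot unfolding total_term_def by auto
qed

lemma liminf_agree: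
  assumes lim: "is_liminf ar lam a T" and b0: "\<beta>0 < lam" and wfw: "wf_pterm ar w"
    and Qsub: "\<forall>p\<in>Q. w p \<noteq> None" and Qpc: "\<forall>p q. p @ q \<in> Q \<longrightarrow> p \<in> Q"
    and ag: "\<forall>\<iota>. \<beta>0 \<le> \<iota> \<and> \<iota> < lam \<longrightarrow> wf_pterm ar (a \<iota>) \<and> (\<forall>p\<in>Q. a \<iota> p = w p)"
  shows "\<forall>p\<in>Q. T p \<noteq> None \<and> (w p \<noteq> Some Bot \<longrightarrow> T p = w p)"
proof (cases "Q = {}")
  case True then show ?thesis by simp
next
  case False
  then obtain p0 where "p0 \<in> Q" by auto
  then have Q0: "[] \<in> Q" using Qpc by (metis append_Nil)
  define u where "u = (\<lambda>p. if p \<in> Q then w p else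
      if (\<exists>q i. p = q @ [i] \<and> q \<in> Q) \<and> w p \<noteq> None then Some Bot else None)"
  have uwf: "wf_pterm ar u"
  proof -
    have c1: "u [] \<noteq> None" using Q0 Qsub unfolding u_def by auto
    have c2: "\<exists>f. u p = Some (Fun f) \<and> i < ar f" if h: "u (p @ [i]) \<noteq> None" for p i
    proof -
      have pq: "p \<in> Q \<and> w (p @ [i]) \<noteq> None"
      proof (cases "p @ [i] \<in> Q")
        case True then show ?thesis using Qpc Qsub by blast
      next
        case False then show ?thesis using h unfolding u_def by (auto split: if_splits)
      qed
      then obtain f where "w p = Some (Fun f)" "i < ar f" using wfw unfolding wf_pterm_def by blast
      then show ?thesis using pq unfolding u_def by simp
    qed
    have c3: "u (p @ [i]) \<noteq> None" if h: "u p = Some (Fun f)" "i < ar f" for p f i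
    proof -
      have pq: "p \<in> Q" "w p = Some (Fun f)" using h unfolding u_def by (auto split: if_splits)
      then have "w (p @ [i]) \<noteq> None" using wfw h(2) unfolding wf_pterm_def by blast
      then show ?thesis using pq Qsub unfolding u_def by auto
    qed
    show ?thesis unfolding wf_pterm_def using c1 c2 c3 by blast
  qed
  have ule: "le_bot u b" if wb: "wf_pterm ar b" and bq: "\<forall>p\<in>Q. b p = w p" for b
  proof -
    have d1: "b p \<noteq> None" if h: "u p \<noteq> None" for p
    proof (cases "p \<in> Q")
      case True then show ?thesis using bq Qsub by auto
    next
      case False
      then obtain q i where qi: "p = q @ [i]" "q \<in> Q" "w p \<noteq> None" using h unfolding u_def by (auto split: if_splits)
      then obtain f where "w q = Some (Fun f)" "i < ar f" using wfw unfolding wf_pterm_def by blast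
      then have "b q = Some (Fun f)" "i < ar f" using bq qi by auto
      then show ?thesis using wb qi unfolding wf_pterm_def by blast
    qed
    have d2: "u p = b p" if h: "u p \<noteq> None" "u p \<noteq> Some Bot" for p
      using h bq unfolding u_def by (auto split: if_splits)
    show ?thesis unfolding le_bot_def using d1 d2 by blast
  qed
  from lim obtain g where glb: "\<forall>\<beta><lam. is_glb ar {a \<iota> | \<iota>. \<beta> \<le> \<iota> \<and> \<iota> < lam} (g \<beta>)"
     and lub: "is_lub ar {g \<beta> | \<beta>. \<beta> < lam} T" unfolding is_liminf_def by blast
  have "le_bot u (g \<beta>0)"
  proof -
    have "is_glb ar {a \<iota> | \<iota>. \<beta>0 \<le> \<iota> \<and> \<iota> < lam} (g \<beta>0)" using glb b0 by blast
    moreover have "\<forall>x\<in>{a \<iota> | \<iota>. \<beta>0 \<le> \<iota> \<and> \<iota> < lam}. le_bot u x" using ule ag by blast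
    ultimately show ?thesis using uwf unfolding is_glb_def by blast
  qed
  moreover have "le_bot (g \<beta>0) T" using lub b0 unfolding is_lub_def by blast
  ultimately have uT: "le_bot u T" by (rule le_bot_trans)
  show ?thesis
  proof
    fix p assume pQ: "p \<in> Q"
    have "u p = w p" using pQ unfolding u_def by simp
    then show "T p \<noteq> None \<and> (w p \<noteq> Some Bot \<longrightarrow> T p = w p)"
      using uT pQ Qsub unfolding le_bot_def by metis
  qed
qed

lemma lub_wf: "is_lub ar A T \<Longrightarrow> wf_pterm ar T" unfolding is_lub_def by (elim conjE)
lemma lub_upper: "is_lub ar A T \<Longrightarrow> a \<in> A \<Longrightarrow> le_bot a T" unfolding is_lub_def by (elim conjE) (erule bspec)
lemma lub_least: "is_lub ar A T \<Longrightarrow> wf_pterm ar u \<Longrightarrow> (\<forall>a\<in>A. le_bot a u) \<Longrightarrow> le_bot T u"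
  unfolding is_lub_def by (elim conjE) (erule allE, erule mp, rule conjI)

lemma lub_bot:
  assumes lub: "is_lub ar A T" and wfA: "\<forall>a\<in>A. wf_pterm ar a" and pos: "T p \<noteq> None"
    and nb: "\<forall>a\<in>A. a p = None \<or> a p = Some Bot"
  shows "T p = Some Bot"
proof -
  have wfT: "wf_pterm ar T" using lub_wf[OF lub] .
  let ?u = "replace_at T p bot_term"
  have uwf: "wf_pterm ar ?u" using replace_wf[OF wfT pos] .
  have "le_bot a ?u" if aA: "a \<in> A" for a
  proof -
    have aT: "le_bot a T" using lub_upper[OF lub aA] .
    have wa: "wf_pterm ar a" using wfA aA by blast
    have below: "a (p @ q) = None" if "q \<noteq> []" for q
    proof (rule ccontr)
      assume h: "a (p @ q) \<noteq> None"
      have "\<forall>f. a p \<noteq> Some (Fun f)" using nb aA by auto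
      then show False using wf_leaf[OF wa _ h] that by blast
    qed
    have nq: "\<not> (\<exists>q. x = p @ q)" if ax: "a x \<noteq> None" and xp: "x \<noteq> p" for x
    proof
      assume "\<exists>q. x = p @ q"
      then obtain q where xq: "x = p @ q" by blast
      have "q \<noteq> []" using xq xp by auto
      then have "a x = None" using below xq by simp
      then show False using ax by simp
    qed
    have d1: "?u x \<noteq> None" if ax: "a x \<noteq> None" for x
    proof (cases "x = p")
      case True then show ?thesis by (simp add: replace_bot)
    next
      case False
      have "T x \<noteq> None" using aT ax unfolding le_bot_def by simp
      then show ?thesis using nq[OF ax False] False by (simp add: replace_bot)
    qed
    have d2: "a x = ?u x" if h: "a x \<noteq> None" "a x \<noteq> Some Bot" for x
    proof -
      have xp: "x \<noteq> p" using nb aA h by auto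
      have "a x = T x" using aT h unfolding le_bot_def by simp
      then show ?thesis using nq[OF h(1) xp] xp by (simp add: replace_bot)
    qed
    show ?thesis unfolding le_bot_def using d1 d2 by simp
  qed
  then have allA: "\<forall>a\<in>A. le_bot a ?u" by blast
  have "le_bot T ?u" using lub_least[OF lub uwf allA] .
  then have "T p \<noteq> Some Bot \<longrightarrow> T p = ?u p" using pos unfolding le_bot_def by blast
  moreover have "?u p = Some Bot" by (simp add: replace_bot)
  ultimately show ?thesis by auto
qed

lemma pred_exists:
  fixes \<iota> :: "'o::wellorder"
  assumes "\<exists>i. i < \<iota>" and "\<not> is_limit \<iota>"
  shows "\<exists>j<\<iota>. osucc j = \<iota>"
proof -
  from assms obtain i where i: "i < \<iota>" "\<forall>j. i < j \<longrightarrow> \<not> j < \<iota>" unfolding is_limit_def by blast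
  have "osucc i = \<iota>" unfolding osucc_def
    by (rule Least_equality) (use i in \<open>auto simp: not_less\<close>)
  then show ?thesis using i by blast
qed

lemma least_bot:
  fixes \<iota> :: "'o::wellorder"
  assumes "\<not> (\<exists>i. i < \<iota>)"
  shows "(LEAST i. True) = \<iota>"
  by (rule Least_equality) (use assms in \<open>auto simp: not_less\<close>)

lemma osucc_le: "j < b \<Longrightarrow> osucc j \<le> b"
  unfolding osucc_def by (rule Least_le)

lemma ctxt_agree:
  assumes "\<forall>p q. p @ q \<in> Q \<longrightarrow> p \<in> Q" "ps \<iota> \<notin> Q" "p \<in> Q"
  shows "ctxt_at ts ps \<iota> p = ts \<iota> p"
proof -
  have "\<not> (\<exists>q. p = ps \<iota> @ q)" using assms by blast
  moreover have "p \<noteq> ps \<iota>" using assms by blast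
  ultimately show ?thesis unfolding ctxt_at_def replace_bot by simp
qed

lemma ctxt_wf:
  assumes "rstep ar R (ts \<iota>) (ps \<iota>) t'"
  shows "wf_pterm ar (ctxt_at ts ps \<iota>)"
  using assms replace_wf unfolding rstep_def ctxt_at_def poss_def by blast

lemma invariance:
  fixes ts :: "'o::wellorder \<Rightarrow> ('f, 'v) pterm"
  assumes red: "is_reduction ar R ts ps \<alpha>"
    and lims: "\<forall>lam<\<alpha>. is_limit lam \<longrightarrow> is_liminf ar lam (ctxt_at ts ps) (ts lam)"
    and L: "L \<le> \<alpha>"
    and totb: "total_term (ts \<beta>0)" and wfb: "wf_pterm ar (ts \<beta>0)"
    and Qsub: "\<forall>p\<in>Q. ts \<beta>0 p \<noteq> None"
    and Qpc: "\<forall>p q. p @ q \<in> Q \<longrightarrow> p \<in> Q"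
    and avoid: "\<forall>\<gamma>. \<beta>0 \<le> \<gamma> \<and> \<gamma> < L \<longrightarrow> ps \<gamma> \<notin> Q"
  shows "\<beta>0 \<le> \<iota> \<and> \<iota> < L \<longrightarrow> (\<forall>p\<in>Q. ts \<iota> p = ts \<beta>0 p)"
proof (induction \<iota> rule: less_induct)
  case (less \<iota>)
  show ?case
  proof (intro impI)
    assume r: "\<beta>0 \<le> \<iota> \<and> \<iota> < L"
    have iL: "\<iota> < L" using r by blast
    have ia: "\<iota> < \<alpha>" using iL L by (rule less_le_trans)
    show "\<forall>p\<in>Q. ts \<iota> p = ts \<beta>0 p"
    proof (cases "\<iota> = \<beta>0")
      case True then show ?thesis by simp
    next
      case False
      then have lt: "\<beta>0 < \<iota>" using r by (simp add: order.not_eq_order_implies_strict)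
      show ?thesis
      proof (cases "is_limit \<iota>")
        case True
        have lim: "is_liminf ar \<iota> (ctxt_at ts ps) (ts \<iota>)" using lims True ia by blast
        have "\<forall>\<kappa>. \<beta>0 \<le> \<kappa> \<and> \<kappa> < \<iota> \<longrightarrow> wf_pterm ar (ctxt_at ts ps \<kappa>) \<and>
            (\<forall>p\<in>Q. ctxt_at ts ps \<kappa> p = ts \<beta>0 p)"
        proof (intro allI impI conjI ballI)
          fix \<kappa> assume k: "\<beta>0 \<le> \<kappa> \<and> \<kappa> < \<iota>"
          have ki: "\<kappa> < \<iota>" using k by blast
          have kL: "\<kappa> < L" using ki iL by (rule less_trans)
          have ka: "\<kappa> < \<alpha>" using ki ia by (rule less_trans)
          have "rstep ar R (ts \<kappa>) (ps \<kappa>) (ts (osucc \<kappa>))" using red ka unfolding is_reduction_def by blast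
          then show "wf_pterm ar (ctxt_at ts ps \<kappa>)" by (rule ctxt_wf)
          fix p assume pQ: "p \<in> Q"
          have "ps \<kappa> \<notin> Q" using avoid k kL by blast
          then have "ctxt_at ts ps \<kappa> p = ts \<kappa> p" by (rule ctxt_agree[OF Qpc _ pQ])
          also have "\<dots> = ts \<beta>0 p" using less[OF ki] k kL pQ by blast
          finally show "ctxt_at ts ps \<kappa> p = ts \<beta>0 p" .
        qed
        then have "\<forall>p\<in>Q. ts \<iota> p \<noteq> None \<and> (ts \<beta>0 p \<noteq> Some Bot \<longrightarrow> ts \<iota> p = ts \<beta>0 p)"
          by (rule liminf_agree[OF lim lt wfb Qsub Qpc])
        then show ?thesis using totb unfolding total_term_def by blast
      next
        case False
        then obtain j where j: "j < \<iota>" "osucc j = \<iota>" using pred_exists lt by blast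
        have jb: "\<beta>0 \<le> j"
        proof (rule ccontr)
          assume "\<not> \<beta>0 \<le> j" then have "j < \<beta>0" by simp
          then have "osucc j \<le> \<beta>0" by (rule osucc_le)
          then show False using j lt by simp
        qed
        have jL: "j < L" using j(1) iL by (rule less_trans)
        have ja: "j < \<alpha>" using j(1) ia by (rule less_trans)
        have "rstep ar R (ts j) (ps j) (ts (osucc j))" using red ja unfolding is_reduction_def by blast
        then have st: "rstep ar R (ts j) (ps j) (ts \<iota>)" using j(2) by simp
        then obtain v where tv: "ts \<iota> = replace_at (ts j) (ps j) v" unfolding rstep_def by blast
        have pj: "ps j \<notin> Q" using avoid jb jL by blast
        show ?thesis
        proof
          fix p assume pQ: "p \<in> Q"
          have np: "\<not> (\<exists>q. p = ps j @ q)" using pj pQ Qpc by blast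
          have "ts \<iota> p = ts j p" using np unfolding tv replace_at_def by simp
          also have "\<dots> = ts \<beta>0 p" using less[OF j(1)] jb jL pQ by blast
          finally show "ts \<iota> p = ts \<beta>0 p" .
        qed
      qed
    qed
  qed
qed

lemma take_prefix: "p @ q = take k xs \<Longrightarrow> p = take (length p) xs \<and> length p \<le> k \<and> length p \<le> length xs"
proof -
  assume h: "p @ q = take k xs"
  have "take (length p) (take k xs) = p" using h[symmetric] by simp
  moreover have "length p \<le> length (take k xs)" using h[symmetric] by simp
  ultimately show ?thesis by (simp add: min_def split: if_splits)
qed

lemma red_step: "is_reduction ar R ts ps \<alpha> \<Longrightarrow> \<iota> < \<alpha> \<Longrightarrow> rstep ar R (ts \<iota>) (ps \<iota>) (ts (osucc \<iota>))"
  unfolding is_reduction_def by blast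

lemma rstep_wf: "rstep ar R t \<pi> t' \<Longrightarrow> wf_pterm ar t \<and> t \<pi> \<noteq> None"
  unfolding rstep_def poss_def by blast

lemma ctxt_wf2: "is_reduction ar R ts ps \<alpha> \<Longrightarrow> \<iota> < \<alpha> \<Longrightarrow> wf_pterm ar (ctxt_at ts ps \<iota>)"
  using ctxt_wf red_step by metis

lemma liminf_wf: "is_liminf ar lam a T \<Longrightarrow> wf_pterm ar T"
  unfolding is_liminf_def is_lub_def by blast

lemma limit_total:
  fixes ts :: "'o::wellorder \<Rightarrow> ('f, 'v) pterm"
  assumes red: "is_reduction ar R ts ps \<alpha>"
    and lims: "\<forall>lam<\<alpha>. is_limit lam \<longrightarrow> is_liminf ar lam (ctxt_at ts ps) (ts lam)"
    and L: "lam \<le> \<alpha>" and isl: "is_limit lam"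
    and tot: "\<forall>\<kappa><lam. total_term (ts \<kappa>)"
    and nv: "\<forall>\<pi>. \<not> volatile_in_prefix ps lam \<pi>"
    and lim: "is_liminf ar lam (ctxt_at ts ps) T"
  shows "total_term T"
proof (rule ccontr)
  assume "\<not> total_term T"
  then obtain \<pi> where T\<pi>: "T \<pi> = Some Bot" unfolding total_term_def by blast
  have wfT: "wf_pterm ar T" using liminf_wf[OF lim] .
  define P where "P = (\<lambda>k. take k \<pi>) ` {..length \<pi>}"
  have finP: "finite P" unfolding P_def by simp
  have "\<pi> \<in> P" unfolding P_def by (rule image_eqI[of _ _ "length \<pi>"]) auto
  then have neP: "P \<noteq> {}" by blast
  have "\<forall>p\<in>P. \<exists>b. b < lam \<and> (\<forall>\<gamma>. b \<le> \<gamma> \<and> \<gamma> < lam \<longrightarrow> ps \<gamma> \<noteq> p)"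
    using nv isl unfolding volatile_in_prefix_def by blast
  then obtain f where f: "\<forall>p\<in>P. f p < lam \<and> (\<forall>\<gamma>. f p \<le> \<gamma> \<and> \<gamma> < lam \<longrightarrow> ps \<gamma> \<noteq> p)"
    by metis
  define \<beta>0 where "\<beta>0 = Max (f ` P)"
  have b0: "\<beta>0 < lam" unfolding \<beta>0_def using finP neP f by auto
  have avoidP: "\<forall>\<gamma>. \<beta>0 \<le> \<gamma> \<and> \<gamma> < lam \<longrightarrow> ps \<gamma> \<notin> P"
  proof (intro allI impI notI)
    fix \<gamma> assume g: "\<beta>0 \<le> \<gamma> \<and> \<gamma> < lam" and "ps \<gamma> \<in> P"
    moreover have "f (ps \<gamma>) \<le> \<beta>0" unfolding \<beta>0_def using finP \<open>ps \<gamma> \<in> P\<close> by auto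
    ultimately show False using f order_trans by metis
  qed
  have b0a: "\<beta>0 < \<alpha>" using b0 L by auto
  have wfb: "wf_pterm ar (ts \<beta>0)" using rstep_wf[OF red_step[OF red b0a]] by blast
  have totb: "total_term (ts \<beta>0)" using tot b0 by blast
  define Q where "Q = {p \<in> P. ts \<beta>0 p \<noteq> None}"
  have Qsub: "\<forall>p\<in>Q. ts \<beta>0 p \<noteq> None" unfolding Q_def by blast
  have Qpc: "\<forall>p q. p @ q \<in> Q \<longrightarrow> p \<in> Q"
  proof (intro allI impI)
    fix p q assume h: "p @ q \<in> Q"
    then obtain k where k: "k \<le> length \<pi>" "p @ q = take k \<pi>" unfolding Q_def P_def by auto
    then have tp: "p = take (length p) \<pi> \<and> length p \<le> length \<pi>" using take_prefix by blast
    then have "p \<in> P" unfolding P_def by auto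
    moreover have "ts \<beta>0 p \<noteq> None" using wf_prefix[OF wfb] h unfolding Q_def by blast
    ultimately show "p \<in> Q" unfolding Q_def by blast
  qed
  have avoid: "\<forall>\<gamma>. \<beta>0 \<le> \<gamma> \<and> \<gamma> < lam \<longrightarrow> ps \<gamma> \<notin> Q" using avoidP unfolding Q_def by blast
  have inv: "\<forall>\<kappa>. \<beta>0 \<le> \<kappa> \<and> \<kappa> < lam \<longrightarrow> (\<forall>p\<in>Q. ts \<kappa> p = ts \<beta>0 p)"
    using invariance[OF red lims L totb wfb Qsub Qpc avoid] by blast
  have "\<forall>\<kappa>. \<beta>0 \<le> \<kappa> \<and> \<kappa> < lam \<longrightarrow> wf_pterm ar (ctxt_at ts ps \<kappa>) \<and>
            (\<forall>p\<in>Q. ctxt_at ts ps \<kappa> p = ts \<beta>0 p)"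
  proof (intro allI impI conjI ballI)
    fix \<kappa> assume k: "\<beta>0 \<le> \<kappa> \<and> \<kappa> < lam"
    then have ka: "\<kappa> < \<alpha>" using L by auto
    show "wf_pterm ar (ctxt_at ts ps \<kappa>)" by (rule ctxt_wf2[OF red ka])
    fix p assume pQ: "p \<in> Q"
    have "ps \<kappa> \<notin> Q" using avoid k by auto
    then have "ctxt_at ts ps \<kappa> p = ts \<kappa> p" by (rule ctxt_agree[OF Qpc _ pQ])
    also have "\<dots> = ts \<beta>0 p" using inv k pQ by auto
    finally show "ctxt_at ts ps \<kappa> p = ts \<beta>0 p" .
  qed
  then have ag0: "\<forall>p\<in>Q. T p \<noteq> None \<and> (ts \<beta>0 p \<noteq> Some Bot \<longrightarrow> T p = ts \<beta>0 p)"
    using liminf_agree[OF lim b0 wfb Qsub Qpc] by blast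
  then have ag: "\<forall>p\<in>Q. T p = ts \<beta>0 p" using totb unfolding total_term_def by blast
  have "k \<le> length \<pi> \<longrightarrow> take k \<pi> \<in> Q" for k
  proof (induction k)
    case 0
    have "[] \<in> P" unfolding P_def by (rule image_eqI[of _ _ 0]) auto
    moreover have "ts \<beta>0 [] \<noteq> None" using wfb unfolding wf_pterm_def by blast
    ultimately show ?case unfolding Q_def by simp
  next
    case (Suc k)
    show ?case
    proof
      assume sk: "Suc k \<le> length \<pi>"
      then have kQ: "take k \<pi> \<in> Q" using Suc by simp
      have ts: "take (Suc k) \<pi> = take k \<pi> @ [\<pi> ! k]" using sk by (simp add: take_Suc_conv_app_nth)
      have "T (take (Suc k) \<pi> @ drop (Suc k) \<pi>) \<noteq> None" using T\<pi> by simp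
      then have "T (take k \<pi> @ [\<pi> ! k]) \<noteq> None" using wf_prefix[OF wfT] ts by metis
      then obtain g where g: "T (take k \<pi>) = Some (Fun g)" "\<pi> ! k < ar g" using wfT unfolding wf_pterm_def by blast
      then have "ts \<beta>0 (take k \<pi>) = Some (Fun g)" using ag kQ by simp
      then have "ts \<beta>0 (take (Suc k) \<pi>) \<noteq> None" using wfb g(2) ts unfolding wf_pterm_def by metis
      moreover have "take (Suc k) \<pi> \<in> P" unfolding P_def using sk by auto
      ultimately show "take (Suc k) \<pi> \<in> Q" unfolding Q_def by blast
    qed
  qed
  then have "\<pi> \<in> Q" by (metis order_refl take_all)
  then have "T \<pi> = ts \<beta>0 \<pi>" using ag by blast
  then have "ts \<beta>0 \<pi> = Some Bot" using T\<pi> by simp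
  then show False using totb unfolding total_term_def by blast
qed

theorem lemma3p15:
  fixes ar :: "'f \<Rightarrow> nat"
    and R :: "(('f, 'v) pterm \<times> ('f, 'v) pterm) set"
    and ts :: "'o::wellorder \<Rightarrow> ('f, 'v) pterm"
    and ps :: "'o \<Rightarrow> nat list"
    and \<alpha> :: 'o
    and s t :: "('f, 'v) pterm"
  assumes "is_TRS ar R"
    and "wf_pterm ar s"
    and "total_term s"
    and "strongly_p_converges ar R ts ps \<alpha> s t"
  shows "reduction_total ts \<alpha> t \<longleftrightarrow>
         \<not> (\<exists>\<beta>\<le>\<alpha>. \<exists>\<pi>. volatile_in_prefix ps \<beta> \<pi>)"
proof -
  note trs = assms(1)
  have red: "is_reduction ar R ts ps \<alpha>" and s0: "ts (LEAST i. True) = s"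
    and lims: "\<forall>lam<\<alpha>. is_limit lam \<longrightarrow> is_liminf ar lam (ctxt_at ts ps) (ts lam)"
    and fin: "if is_limit \<alpha> then is_liminf ar \<alpha> (ctxt_at ts ps) t else t = ts \<alpha>"
    using assms(4) unfolding strongly_p_converges_def by blast+
  show ?thesis
  proof
    assume rt: "reduction_total ts \<alpha> t"
    have tot: "\<forall>\<iota><\<alpha>. total_term (ts \<iota>)" and tt: "total_term t"
      using rt unfolding reduction_total_def by blast+
    show "\<not> (\<exists>\<beta>\<le>\<alpha>. \<exists>\<pi>. volatile_in_prefix ps \<beta> \<pi>)"
    proof
      assume "\<exists>\<beta>\<le>\<alpha>. \<exists>\<pi>. volatile_in_prefix ps \<beta> \<pi>"
      then obtain \<beta> \<pi> where b: "\<beta> \<le> \<alpha>" and v: "volatile_in_prefix ps \<beta> \<pi>" by blast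
      have isl: "is_limit \<beta>" using v unfolding volatile_in_prefix_def by blast
      define T where "T = (if \<beta> = \<alpha> then t else ts \<beta>)"
      have totT: "total_term T" using tot tt b unfolding T_def by (auto simp: order.not_eq_order_implies_strict)
      have lim: "is_liminf ar \<beta> (ctxt_at ts ps) T"
        using fin lims b isl unfolding T_def by (auto simp: order.not_eq_order_implies_strict)
      have wfT: "wf_pterm ar T" using liminf_wf[OF lim] .
      have "\<exists>k. volatile_in_prefix ps \<beta> (take k \<pi>)" using v by (metis take_all order_refl)
      then obtain k where vk: "volatile_in_prefix ps \<beta> (take k \<pi>)"
        and mink: "\<forall>j<k. \<not> volatile_in_prefix ps \<beta> (take j \<pi>)"
        using exists_least_iff[where P = "\<lambda>k. volatile_in_prefix ps \<beta> (take k \<pi>)"] by blast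
      define \<pi>' where "\<pi>' = take k \<pi>"
      have klen: "k \<le> length \<pi>"
      proof (rule ccontr)
        assume "\<not> k \<le> length \<pi>"
        then have "length \<pi> < k" "take k \<pi> = take (length \<pi>) \<pi>" by auto
        then show False using vk mink by metis
      qed
      have lpi: "length \<pi>' = k" unfolding \<pi>'_def using klen by simp
      define Q where "Q = (\<lambda>j. take j \<pi>') ` {..<length \<pi>'}"
      have finQ: "finite Q" unfolding Q_def by simp
      have Qnv: "\<forall>p\<in>Q. \<not> volatile_in_prefix ps \<beta> p"
        using mink unfolding Q_def \<pi>'_def lpi by auto
      have "\<forall>p\<in>Q. \<exists>b. b < \<beta> \<and> (\<forall>\<gamma>. b \<le> \<gamma> \<and> \<gamma> < \<beta> \<longrightarrow> ps \<gamma> \<noteq> p)"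
        using Qnv isl unfolding volatile_in_prefix_def by blast
      then obtain f where f: "\<forall>p\<in>Q. f p < \<beta> \<and> (\<forall>\<gamma>. f p \<le> \<gamma> \<and> \<gamma> < \<beta> \<longrightarrow> ps \<gamma> \<noteq> p)"
        by metis
      obtain i0 where i0: "i0 < \<beta>" using isl unfolding is_limit_def by blast
      define \<beta>1 where "\<beta>1 = Max (insert i0 (f ` Q))"
      have b1: "\<beta>1 < \<beta>" unfolding \<beta>1_def using finQ f i0 by auto
      obtain \<gamma> where g: "\<beta>1 \<le> \<gamma>" "\<gamma> < \<beta>" "ps \<gamma> = \<pi>'"
        using vk b1 unfolding volatile_in_prefix_def \<pi>'_def by blast
      have avoid: "\<forall>\<kappa>. \<gamma> \<le> \<kappa> \<and> \<kappa> < \<beta> \<longrightarrow> ps \<kappa> \<notin> Q"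
      proof (intro allI impI notI)
        fix \<kappa> assume k: "\<gamma> \<le> \<kappa> \<and> \<kappa> < \<beta>" and kQ: "ps \<kappa> \<in> Q"
        have "f (ps \<kappa>) \<le> \<beta>1" unfolding \<beta>1_def using finQ kQ by auto
        then have "f (ps \<kappa>) \<le> \<kappa>" using k g by (meson order_trans)
        then show False using f kQ k by blast
      qed
      have ga: "\<gamma> < \<alpha>" using g b by auto
      have wfg: "wf_pterm ar (ts \<gamma>)" and posg: "ts \<gamma> \<pi>' \<noteq> None"
        using rstep_wf[OF red_step[OF red ga]] g(3) by auto
      have totg: "total_term (ts \<gamma>)" using tot ga by blast
      have Qsub: "\<forall>p\<in>Q. ts \<gamma> p \<noteq> None"
      proof
        fix p assume "p \<in> Q"
        then obtain j where "p = take j \<pi>'" unfolding Q_def by blast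
        then have "ts \<gamma> (p @ drop j \<pi>') \<noteq> None" using posg by simp
        then show "ts \<gamma> p \<noteq> None" using wf_prefix[OF wfg] by blast
      qed
      have Qpc: "\<forall>p q. p @ q \<in> Q \<longrightarrow> p \<in> Q"
      proof (intro allI impI)
        fix p q assume "p @ q \<in> Q"
        then obtain j where j: "j < length \<pi>'" "p @ q = take j \<pi>'" unfolding Q_def by blast
        then have "p = take (length p) \<pi>' \<and> length p \<le> j" using take_prefix by blast
        then show "p \<in> Q" unfolding Q_def using j(1) by auto
      qed
      have inv: "\<forall>\<kappa>. \<gamma> \<le> \<kappa> \<and> \<kappa> < \<beta> \<longrightarrow> (\<forall>p\<in>Q. ts \<kappa> p = ts \<gamma> p)"
        using invariance[OF red lims b totg wfg Qsub Qpc avoid] by blast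
      have "\<forall>\<kappa>. \<gamma> \<le> \<kappa> \<and> \<kappa> < \<beta> \<longrightarrow> wf_pterm ar (ctxt_at ts ps \<kappa>) \<and>
                (\<forall>p\<in>Q. ctxt_at ts ps \<kappa> p = ts \<gamma> p)"
      proof (intro allI impI conjI ballI)
        fix \<kappa> assume k: "\<gamma> \<le> \<kappa> \<and> \<kappa> < \<beta>"
        then have ka: "\<kappa> < \<alpha>" using b by auto
        show "wf_pterm ar (ctxt_at ts ps \<kappa>)" by (rule ctxt_wf2[OF red ka])
        fix p assume pQ: "p \<in> Q"
        have "ps \<kappa> \<notin> Q" using avoid k by auto
        then have "ctxt_at ts ps \<kappa> p = ts \<kappa> p" by (rule ctxt_agree[OF Qpc _ pQ])
        also have "\<dots> = ts \<gamma> p" using inv k pQ by auto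
        finally show "ctxt_at ts ps \<kappa> p = ts \<gamma> p" .
      qed
      then have "\<forall>p\<in>Q. T p \<noteq> None \<and> (ts \<gamma> p \<noteq> Some Bot \<longrightarrow> T p = ts \<gamma> p)"
        using liminf_agree[OF lim g(2) wfg Qsub Qpc] by blast
      then have ag: "\<forall>p\<in>Q. T p = ts \<gamma> p" using totg unfolding total_term_def by blast
      have Tpi: "T \<pi>' \<noteq> None"
      proof (cases "\<pi>' = []")
        case True then show ?thesis using wfT unfolding wf_pterm_def by simp
      next
        case False
        then obtain q i where qi: "\<pi>' = q @ [i]" by (metis rev_exhaust)
        have "q \<in> Q" unfolding Q_def qi by (rule image_eqI[of _ _ "length q"]) auto
        then have Tq: "T q = ts \<gamma> q" using ag by blast
        obtain fn where "ts \<gamma> q = Some (Fun fn)" "i < ar fn" using wfg posg qi unfolding wf_pterm_def by blast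
        then show ?thesis using Tq wfT qi unfolding wf_pterm_def by metis
      qed
      from lim obtain g where glb: "\<forall>\<beta>'<\<beta>. is_glb ar {ctxt_at ts ps \<iota> | \<iota>. \<beta>' \<le> \<iota> \<and> \<iota> < \<beta>} (g \<beta>')"
        and lub: "is_lub ar {g \<beta>' | \<beta>'. \<beta>' < \<beta>} T" unfolding is_liminf_def by blast
      have wfA: "\<forall>a\<in>{g \<beta>' | \<beta>'. \<beta>' < \<beta>}. wf_pterm ar a" using glb unfolding is_glb_def by blast
      have nb: "\<forall>a\<in>{g \<beta>' | \<beta>'. \<beta>' < \<beta>}. a \<pi>' = None \<or> a \<pi>' = Some Bot"
      proof
        fix a assume "a \<in> {g \<beta>' | \<beta>'. \<beta>' < \<beta>}"
        then obtain \<beta>' where a: "a = g \<beta>'" "\<beta>' < \<beta>" by blast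
        then obtain \<gamma>' where g': "\<beta>' \<le> \<gamma>'" "\<gamma>' < \<beta>" "ps \<gamma>' = \<pi>'"
          using vk unfolding volatile_in_prefix_def \<pi>'_def by blast
        have "le_bot a (ctxt_at ts ps \<gamma>')" using glb a g' unfolding is_glb_def by blast
        moreover have "ctxt_at ts ps \<gamma>' \<pi>' = Some Bot" unfolding ctxt_at_def replace_bot using g' by simp
        ultimately show "a \<pi>' = None \<or> a \<pi>' = Some Bot" unfolding le_bot_def by force
      qed
      have "T \<pi>' = Some Bot" using lub_bot[OF lub wfA Tpi nb] .
      then show False using totT unfolding total_term_def by blast
    qed
  next
    assume nv0: "\<not> (\<exists>\<beta>\<le>\<alpha>. \<exists>\<pi>. volatile_in_prefix ps \<beta> \<pi>)"
    have pos: "\<iota> < \<alpha> \<longrightarrow> total_term (ts \<iota>)" for \<iota>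
    proof (induction \<iota> rule: less_induct)
      case (less \<iota>)
      show ?case
      proof
        assume ia: "\<iota> < \<alpha>"
        show "total_term (ts \<iota>)"
        proof (cases "\<exists>i. i < \<iota>")
          case False
          then show ?thesis using least_bot[OF False] s0 assms(3) by simp
        next
          case True
          show ?thesis
          proof (cases "is_limit \<iota>")
            case lt: True
            show ?thesis
            proof (rule limit_total[OF red lims _ lt])
              show "\<iota> \<le> \<alpha>" using ia by simp
              show "\<forall>\<kappa><\<iota>. total_term (ts \<kappa>)" using less ia by auto
              show "\<forall>\<pi>. \<not> volatile_in_prefix ps \<iota> \<pi>" using nv0 ia by auto
              show "is_liminf ar \<iota> (ctxt_at ts ps) (ts \<iota>)" using lims ia lt by blast
            qed
          next
            case False
            then obtain j where j: "j < \<iota>" "osucc j = \<iota>" using pred_exists True by blast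
            have "rstep ar R (ts j) (ps j) (ts \<iota>)" using red j ia unfolding is_reduction_def by force
            moreover have "total_term (ts j)" using less j ia by auto
            ultimately show ?thesis using rstep_total[OF trs] by blast
          qed
        qed
      qed
    qed
    have "total_term t"
    proof (cases "is_limit \<alpha>")
      case True
      show ?thesis
      proof (rule limit_total[OF red lims _ True])
        show "\<alpha> \<le> \<alpha>" by simp
        show "\<forall>\<kappa><\<alpha>. total_term (ts \<kappa>)" using pos by blast
        show "\<forall>\<pi>. \<not> volatile_in_prefix ps \<alpha> \<pi>" using nv0 by auto
        show "is_liminf ar \<alpha> (ctxt_at ts ps) t" using fin True by simp
      qed
    next
      case False
      then have tt: "t = ts \<alpha>" using fin by simp
      show ?thesis
      proof (cases "\<exists>i. i < \<alpha>")
        case nb: False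
        then show ?thesis using least_bot[OF nb] s0 assms(3) tt by simp
      next
        case True
        then obtain j where j: "j < \<alpha>" "osucc j = \<alpha>" using pred_exists False by blast
        have "rstep ar R (ts j) (ps j) (ts \<alpha>)" using red j unfolding is_reduction_def by force
        moreover have "total_term (ts j)" using pos j by auto
        ultimately show ?thesis using rstep_total[OF trs] tt by blast
      qed
    qed
    then show "reduction_total ts \<alpha> t" using pos unfolding reduction_total_def by blast
  qed
qed

end
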